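(* Let $(\mathbf Z_n,\mathbf A_{n\times n})$ be generated from the stochastic block model with parameters $(\pi,\rho_nS)$, with $n\rho_n\to\infty$; let $\alpha>0$, $0<\delta<s_{\min}/2$, and suppose $n\rho_n>\frac{4s_{\max}}{\alpha^2\delta^2}$. Then \[ \frac{o_{ab}(\mathbf e_n)}{\rho_n\,n_{ab}(\mathbf e_n)}\in(s_{\min}-\delta,\ s_{\max}+\delta) \] simultaneously for all $a,b\in[k]$ and all $\mathbf e_n\in[k]^n$ satisfying $n_a(\mathbf e_n)\ge\alpha n$ for all $a$, eventually almost surely as $n\to\infty$.
   Context: SBM with parameters $(\pi,\rho_nS)$: $k\ge2$ fixed; $\pi$ a probability vector on $[k]$ with all $\pi_a>0$; $S$ a fixed symmetric $k\times k$ matrix with strictly positive entries and no two identical columns, $s_{\min},s_{\max}$ its minimal and maximal entries; $\rho_n\to0$. $\mathbf Z_n$ i.i.d. with law $\pi$; given $\mathbf Z_n=\mathbf z_n$, $\mathbf A_{n\times n}$ symmetric, zero diagonal, $A_{ij}$ ($i<j$) independent Bernoulli$(\rho_nS_{z_iz_j})$. For $\mathbf e_n\in[k]^n$: $n_a(\mathbf e_n)=\#\{i:e_i=a\}$; $n_{ab}=n_an_b$ ($a\ne b$), $n_{aa}=n_a(n_a-1)$; $o_{ab}(\mathbf e_n)=\sum_{i,j}\mathbf 1\{e_i=a,e_j=b\}A_{ij}$. *)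

theory Defs
  imports "HOL-Probability.Probability"
begin

text \<open>Stochastic block model on nodes 0..<n with communities 0..<k.
  The community law pi is a pmf p on nat with support exactly 0..<k (so p a = pi_a > 0). Outside the index range the labels default to 0 and A to False.\<close>

definition sbm_pmf :: "nat \<Rightarrow> nat pmf \<Rightarrow> real \<Rightarrow> (nat \<Rightarrow> nat \<Rightarrow> real)
    \<Rightarrow> ((nat \<Rightarrow> nat) \<times> (nat \<Rightarrow> nat \<Rightarrow> bool)) pmf" where
  "sbm_pmf n p r S =
     Pi_pmf {..<n} 0 (\<lambda>_. p) \<bind> (\<lambda>z.
     Pi_pmf {(i, j). i < j \<and> j < n} False (\<lambda>(i, j). bernoulli_pmf (r * S (z i) (z j))) \<bind> (\<lambda>U.
     return_pmf (z, \<lambda>i j. if i < j then U (i, j) else if j < i then U (j, i) else False)))"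

definition n_cnt :: "nat \<Rightarrow> (nat \<Rightarrow> nat) \<Rightarrow> nat \<Rightarrow> nat" where
  "n_cnt n e a = card {i. i < n \<and> e i = a}"

definition n_pair :: "nat \<Rightarrow> (nat \<Rightarrow> nat) \<Rightarrow> nat \<Rightarrow> nat \<Rightarrow> nat" where
  "n_pair n e a b = (if a \<noteq> b then n_cnt n e a * n_cnt n e b
                     else n_cnt n e a * (n_cnt n e a - 1))"

definition o_cnt :: "nat \<Rightarrow> (nat \<Rightarrow> nat \<Rightarrow> bool) \<Rightarrow> (nat \<Rightarrow> nat) \<Rightarrow> nat \<Rightarrow> nat \<Rightarrow> nat" where
  "o_cnt n A e a b = card {(i, j). i < n \<and> j < n \<and> e i = a \<and> e j = b \<and> A i j}"

definition s_min :: "nat \<Rightarrow> (nat \<Rightarrow> nat \<Rightarrow> real) \<Rightarrow> real" where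
  "s_min k S = Min {S a b | a b. a < k \<and> b < k}"

definition s_max :: "nat \<Rightarrow> (nat \<Rightarrow> nat \<Rightarrow> real) \<Rightarrow> real" where
  "s_max k S = Max {S a b | a b. a < k \<and> b < k}"

end

theory Submission
  imports Defs
begin


lemma exp_le_quad:
  fixes u :: real assumes "\<bar>u\<bar> \<le> 1" shows "exp u \<le> 1 + u + u\<^sup>2"
proof (cases "u \<ge> 0")
  case True thus ?thesis using exp_bound assms by auto
next
  case False
  define v where "v = - u"
  have v: "v > 0" using False v_def by auto
  have "exp (-u) \<ge> 1 + v" using exp_ge_add_one_self[of v] v_def by simp
  hence "exp u \<le> 1 / (1 + v)" using v by (simp add: exp_minus field_simps)
  also have "1 / (1 + v) \<le> 1 - v + v\<^sup>2"
    using v by (simp add: field_simps power2_eq_square)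
  finally show ?thesis by (simp add: v_def)
qed

lemma term_bound:
  fixes q t :: real and c :: nat
  assumes "0 \<le> q" "c \<le> 2" "\<bar>t\<bar> \<le> 1/2"
  shows "q * (exp (t * real c) - 1) \<le> q * real c * (t + 2 * t\<^sup>2)"
proof -
  have u: "\<bar>t * real c\<bar> \<le> 1" using assms
  proof -
    have "real c \<le> 2" using assms by simp
    hence "\<bar>t\<bar> * real c \<le> 1/2 * 2" using assms(3) by (intro mult_mono) auto
    thus ?thesis by (simp add: abs_mult)
  qed
  have "exp (t * real c) - 1 \<le> t * real c + (t * real c)\<^sup>2" using exp_le_quad[OF u] by simp
  also have "(t * real c)\<^sup>2 \<le> real c * (2 * t\<^sup>2)"
  proof -
    have "(t * real c)\<^sup>2 = real c * (real c * t\<^sup>2)" by (simp add: power2_eq_square)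
    also have "\<dots> \<le> real c * (2 * t\<^sup>2)" using assms by (intro mult_left_mono mult_right_mono) auto
    finally show ?thesis .
  qed
  finally have "exp (t * real c) - 1 \<le> real c * (t + 2 * t\<^sup>2)" by (simp add: algebra_simps)
  thus ?thesis using assms(1) mult_left_mono by (metis mult.assoc)
qed



lemma chernoff_Pi:
  fixes P :: "'p set" and q :: "'p \<Rightarrow> real" and c :: "'p \<Rightarrow> nat" and s t :: real
  assumes fin: "finite P" and q: "\<And>x. x \<in> P \<Longrightarrow> 0 \<le> q x \<and> q x \<le> 1"
  shows "measure (measure_pmf (Pi_pmf P dflt (\<lambda>x. bernoulli_pmf (q x))))
           {U. s \<le> t * (\<Sum>x\<in>P. real (c x) * (if U x then 1 else 0))}
         \<le> exp (- s + (\<Sum>x\<in>P. q x * (exp (t * real (c x)) - 1)))"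
proof -
  let ?M = "Pi_pmf P dflt (\<lambda>x. bernoulli_pmf (q x))"
  let ?Y = "\<lambda>U. (\<Sum>x\<in>P. real (c x) * (if U x then 1 else 0))"
  let ?B = "{U. s \<le> t * ?Y U}"
  have finM: "finite (set_pmf ?M)" using fin by (simp add: set_Pi_pmf finite_PiE_dflt)
  have "measure (measure_pmf ?M) ?B = measure_pmf.expectation ?M (indicator ?B)" by simp
  also have "\<dots> \<le> measure_pmf.expectation ?M (\<lambda>U. exp (t * ?Y U - s))"
  proof (rule integral_mono)
    show "integrable (measure_pmf ?M) (indicator ?B :: _ \<Rightarrow> real)" by (rule integrable_measure_pmf_finite[OF finM])
    show "integrable (measure_pmf ?M) (\<lambda>U. exp (t * ?Y U - s))" by (rule integrable_measure_pmf_finite[OF finM])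
    fix U show "indicator ?B U \<le> exp (t * ?Y U - s)"
      by (cases "U \<in> ?B") (auto simp: indicator_def)
  qed
  also have "(\<lambda>U. exp (t * ?Y U - s)) = (\<lambda>U. exp (- s) * (\<Prod>x\<in>P. exp (t * real (c x) * (if U x then 1 else 0))))"
  proof
    fix U
    have "exp (t * ?Y U - s) = exp (- s) * exp (\<Sum>x\<in>P. t * real (c x) * (if U x then 1 else 0))"
      by (simp add: sum_distrib_left mult.assoc exp_add[symmetric])
    also have "\<dots> = exp (- s) * (\<Prod>x\<in>P. exp (t * real (c x) * (if U x then 1 else 0)))"
      using fin by (simp add: exp_sum)
    finally show "exp (t * ?Y U - s) = \<dots>" .
  qed
  also have "measure_pmf.expectation ?M (\<lambda>U. exp (- s) * (\<Prod>x\<in>P. exp (t * real (c x) * (if U x then 1 else 0))))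
      = exp (- s) * measure_pmf.expectation ?M (\<lambda>U. (\<Prod>x\<in>P. exp (t * real (c x) * (if U x then 1 else 0))))"
    by simp
  also have "measure_pmf.expectation ?M (\<lambda>U. (\<Prod>x\<in>P. exp (t * real (c x) * (if U x then 1 else 0))))
      = (\<Prod>x\<in>P. measure_pmf.expectation (bernoulli_pmf (q x)) (\<lambda>v. exp (t * real (c x) * (if v then 1 else 0))))"
    by (rule expectation_prod_Pi_pmf[OF fin]) (auto intro: integrable_measure_pmf_finite)
  also have "\<dots> = (\<Prod>x\<in>P. 1 + q x * (exp (t * real (c x)) - 1))"
    by (intro prod.cong refl) (use q in \<open>auto simp: algebra_simps\<close>)
  also have "\<dots> \<le> (\<Prod>x\<in>P. exp (q x * (exp (t * real (c x)) - 1)))"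
  proof (rule prod_mono)
    fix x assume x: "x \<in> P"
    have "0 \<le> 1 + q x * (exp (t * real (c x)) - 1)"
    proof -
      have "q x * (exp (t * real (c x)) - 1) \<ge> q x * (0 - 1)"
        using q[OF x] by (intro mult_left_mono) auto
      thus ?thesis using q[OF x] by simp
    qed
    thus "0 \<le> 1 + q x * (exp (t * real (c x)) - 1) \<and>
          1 + q x * (exp (t * real (c x)) - 1) \<le> exp (q x * (exp (t * real (c x)) - 1))"
      using exp_ge_add_one_self by (simp add: add.commute)
  qed
  also have "\<dots> = exp (\<Sum>x\<in>P. q x * (exp (t * real (c x)) - 1))"
    using fin by (simp add: exp_sum)
  finally have "measure (measure_pmf ?M) ?B \<le> exp (- s) * exp (\<Sum>x\<in>P. q x * (exp (t * real (c x)) - 1))"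
    by (simp add: mult_left_mono)
  thus ?thesis by (simp add: exp_add[symmetric])
qed



definition symA :: "(nat \<times> nat \<Rightarrow> bool) \<Rightarrow> nat \<Rightarrow> nat \<Rightarrow> bool" where
  "symA U = (\<lambda>i j. if i < j then U (i, j) else if j < i then U (j, i) else False)"

definition Qs :: "nat \<Rightarrow> (nat \<Rightarrow> nat) \<Rightarrow> nat \<Rightarrow> nat \<Rightarrow> (nat \<times> nat) set" where
  "Qs n e a b = {(i, j). i < n \<and> j < n \<and> i \<noteq> j \<and> e i = a \<and> e j = b}"

definition gp :: "nat \<times> nat \<Rightarrow> nat \<times> nat" where
  "gp y = (min (fst y) (snd y), max (fst y) (snd y))"

definition cw :: "nat \<Rightarrow> (nat \<Rightarrow> nat) \<Rightarrow> nat \<Rightarrow> nat \<Rightarrow> nat \<times> nat \<Rightarrow> nat" where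
  "cw n e a b x = card {y \<in> Qs n e a b. gp y = x}"

definition Pairs :: "nat \<Rightarrow> (nat \<times> nat) set" where
  "Pairs n = {(i, j). i < j \<and> j < n}"

lemma finite_Qs: "finite (Qs n e a b)"
  by (rule finite_subset[of _ "{..<n} \<times> {..<n}"]) (auto simp: Qs_def)

lemma finite_Pairs: "finite (Pairs n)"
  by (rule finite_subset[of _ "{..<n} \<times> {..<n}"]) (auto simp: Pairs_def)

lemma gp_Qs: "gp ` Qs n e a b \<subseteq> Pairs n"
  by (auto simp: gp_def Qs_def Pairs_def min_def max_def)

lemma cw_le2: "cw n e a b x \<le> 2"
proof -
  obtain u v where x: "x = (u, v)" by fastforce
  have "{y \<in> Qs n e a b. gp y = x} \<subseteq> {(u, v), (v, u)}"
    by (auto simp: x gp_def min_def max_def split: if_splits)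
  hence "cw n e a b x \<le> card {(u, v), (v, u)}" unfolding cw_def by (intro card_mono) auto
  also have "\<dots> \<le> 2" by (simp add: card_insert_le_m1)
  finally show ?thesis .
qed

lemma cw_zero: "x \<notin> gp ` Qs n e a b \<Longrightarrow> cw n e a b x = 0"
proof -
  assume "x \<notin> gp ` Qs n e a b"
  hence e: "{y \<in> Qs n e a b. gp y = x} = {}" by blast
  show ?thesis unfolding cw_def e by simp
qed

lemma sum_cw: "(\<Sum>x\<in>Pairs n. cw n e a b x) = card (Qs n e a b)"
proof -
  have "card (Qs n e a b) = (\<Sum>y\<in>Qs n e a b. (1::nat))" by simp
  also have "\<dots> = (\<Sum>x\<in>gp ` Qs n e a b. \<Sum>y\<in>{y \<in> Qs n e a b. gp y = x}. 1)"
    by (rule sum.image_gen[OF finite_Qs])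
  also have "\<dots> = (\<Sum>x\<in>gp ` Qs n e a b. cw n e a b x)" by (simp add: cw_def)
  also have "\<dots> = (\<Sum>x\<in>Pairs n. cw n e a b x)"
  proof (rule sum.mono_neutral_left[OF finite_Pairs gp_Qs])
    show "\<forall>x\<in>Pairs n - gp ` Qs n e a b. cw n e a b x = 0"
      by (auto simp: cw_zero)
  qed
  finally show ?thesis by simp
qed

lemma o_cnt_eq:
  "real (o_cnt n (symA U) e a b) = (\<Sum>x\<in>Pairs n. real (cw n e a b x) * (if U x then 1 else 0))"
proof -
  have set: "{(i, j). i < n \<and> j < n \<and> e i = a \<and> e j = b \<and> symA U i j} = {y \<in> Qs n e a b. U (gp y)}"
    by (auto simp: symA_def Qs_def gp_def min_def max_def split: if_splits)
  have "real (o_cnt n (symA U) e a b) = real (card {y \<in> Qs n e a b. U (gp y)})"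
    by (simp add: o_cnt_def set)
  also have "\<dots> = (\<Sum>y\<in>Qs n e a b. (if U (gp y) then 1 else 0))"
    using finite_Qs by (simp add: sum.If_cases Int_def)
  also have "\<dots> = (\<Sum>x\<in>gp ` Qs n e a b. \<Sum>y\<in>{y \<in> Qs n e a b. gp y = x}. (if U (gp y) then 1 else 0))"
    by (rule sum.image_gen[OF finite_Qs])
  also have "\<dots> = (\<Sum>x\<in>gp ` Qs n e a b. real (cw n e a b x) * (if U x then 1 else 0))"
    by (intro sum.cong refl) (simp add: cw_def)
  also have "\<dots> = (\<Sum>x\<in>Pairs n. real (cw n e a b x) * (if U x then 1 else 0))"
  proof (rule sum.mono_neutral_left[OF finite_Pairs gp_Qs])
    show "\<forall>x\<in>Pairs n - gp ` Qs n e a b. real (cw n e a b x) * (if U x then 1 else 0) = 0"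
      by (auto simp: cw_zero)
  qed
  finally show ?thesis .
qed

lemma card_Qs: "card (Qs n e a b) = n_pair n e a b"
proof -
  let ?C = "\<lambda>a. {i. i < n \<and> e i = a}"
  have fC: "finite (?C a)" for a by auto
  show ?thesis
  proof (cases "a = b")
    case False
    hence "Qs n e a b = ?C a \<times> ?C b" by (auto simp: Qs_def)
    thus ?thesis using False by (simp add: n_pair_def n_cnt_def card_cartesian_product)
  next
    case True
    have "Qs n e a b = ?C a \<times> ?C a - (\<lambda>i. (i, i)) ` ?C a" using True by (auto simp: Qs_def)
    moreover have "card ((\<lambda>i. (i, i)) ` ?C a) = card (?C a)" by (rule card_image) (auto simp: inj_on_def)
    moreover have "(\<lambda>i. (i, i)) ` ?C a \<subseteq> ?C a \<times> ?C a" by auto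
    ultimately have "card (Qs n e a b) = card (?C a) * card (?C a) - card (?C a)"
      by (simp add: card_Diff_subset card_cartesian_product)
    thus ?thesis using True by (simp add: n_pair_def n_cnt_def algebra_simps)
  qed
qed



lemma cond_bound:
  fixes r smin smax \<delta> lam :: real and z e :: "nat \<Rightarrow> nat"
  assumes r: "r > 0" and rle: "r * smax \<le> 1" and smin: "smin > 0" and smm: "smin \<le> smax"
    and Sb: "\<And>i j. i < n \<Longrightarrow> j < n \<Longrightarrow> smin \<le> S (z i) (z j) \<and> S (z i) (z j) \<le> smax"
    and N: "n_pair n e a b > 0"
    and lam: "0 < lam" "lam \<le> 1/2" "4 * lam * smax \<le> \<delta>" and d: "\<delta> > 0"
  shows "measure (measure_pmf (Pi_pmf (Pairs n) False (\<lambda>x. bernoulli_pmf (r * S (z (fst x)) (z (snd x))))))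
     {U. \<not> (smin - \<delta> < real (o_cnt n (symA U) e a b) / (r * real (n_pair n e a b)) \<and>
             real (o_cnt n (symA U) e a b) / (r * real (n_pair n e a b)) < smax + \<delta>)}
     \<le> 2 * exp (- (r * real (n_pair n e a b) * lam * \<delta> / 2))"
proof -
  define N where "N = real (n_pair n e a b)"
  define q where "q = (\<lambda>x::nat\<times>nat. r * S (z (fst x)) (z (snd x)))"
  define c where "c = cw n e a b"
  define Y where "Y = (\<lambda>U. (\<Sum>x\<in>Pairs n. real (c x) * (if U x then 1 else 0)))"
  let ?M = "measure_pmf (Pi_pmf (Pairs n) False (\<lambda>x. bernoulli_pmf (q x)))"
  have Npos: "N > 0" using N by (simp add: N_def)
  have rN: "r * N > 0" using r Npos by simp
  have qb: "r * smin \<le> q x \<and> q x \<le> r * smax" if "x \<in> Pairs n" for x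
    using Sb[of "fst x" "snd x"] that r by (auto simp: q_def Pairs_def)
  have q01: "0 \<le> q x \<and> q x \<le> 1" if "x \<in> Pairs n" for x
    using qb[OF that] r smin rle by (smt (verit) mult_pos_pos)
  define mu where "mu = (\<Sum>x\<in>Pairs n. q x * real (c x))"
  have sumc: "(\<Sum>x\<in>Pairs n. real (c x)) = N"
    unfolding c_def N_def using sum_cw[of n e a b] card_Qs[of n e a b] by (metis of_nat_sum)
  have mu_up: "mu \<le> r * smax * N"
  proof -
    have "mu \<le> (\<Sum>x\<in>Pairs n. r * smax * real (c x))"
      unfolding mu_def by (intro sum_mono mult_right_mono) (use qb in auto)
    also have "\<dots> = r * smax * N" by (simp add: sum_distrib_left[symmetric] sumc)
    finally show ?thesis .
  qed
  have mu_lo: "r * smin * N \<le> mu"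
  proof -
    have "(\<Sum>x\<in>Pairs n. r * smin * real (c x)) \<le> mu"
      unfolding mu_def by (intro sum_mono mult_right_mono) (use qb in auto)
    moreover have "(\<Sum>x\<in>Pairs n. r * smin * real (c x)) = r * smin * N" by (simp add: sum_distrib_left[symmetric] sumc)
    ultimately show ?thesis by simp
  qed
  have tb: "(\<Sum>x\<in>Pairs n. q x * (exp (t * real (c x)) - 1)) \<le> (t + 2 * t\<^sup>2) * mu"
    if t: "\<bar>t\<bar> \<le> 1/2" for t
  proof -
    have "(\<Sum>x\<in>Pairs n. q x * (exp (t * real (c x)) - 1)) \<le> (\<Sum>x\<in>Pairs n. q x * real (c x) * (t + 2 * t\<^sup>2))"
      by (intro sum_mono term_bound) (use q01 t in \<open>auto simp: c_def cw_le2\<close>)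
    also have "\<dots> = (t + 2 * t\<^sup>2) * mu" unfolding mu_def sum_distrib_left by (intro sum.cong refl) (simp add: mult_ac)
    finally show ?thesis .
  qed
  define E1 where "E1 = {U. lam * (r * N * (smax + \<delta>)) \<le> lam * Y U}"
  define E2 where "E2 = {U. - lam * (r * N * (smin - \<delta>)) \<le> (- lam) * Y U}"
  have sub: "{U. \<not> (smin - \<delta> < real (o_cnt n (symA U) e a b) / (r * N) \<and>
             real (o_cnt n (symA U) e a b) / (r * N) < smax + \<delta>)} \<subseteq> E1 \<union> E2"
  proof
    fix U assume "U \<in> {U. \<not> (smin - \<delta> < real (o_cnt n (symA U) e a b) / (r * N) \<and>
             real (o_cnt n (symA U) e a b) / (r * N) < smax + \<delta>)}"
    hence h: "Y U / (r * N) \<le> smin - \<delta> \<or> smax + \<delta> \<le> Y U / (r * N)"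
      by (auto simp: o_cnt_eq Y_def c_def)
    show "U \<in> E1 \<union> E2"
    proof (cases "Y U / (r * N) \<le> smin - \<delta>")
      case True
      hence "Y U / (r * N) * (r * N) \<le> (smin - \<delta>) * (r * N)" using rN by (intro mult_right_mono) auto
      moreover have "Y U / (r * N) * (r * N) = Y U" using rN Npos r by simp
      ultimately have "Y U \<le> r * N * (smin - \<delta>)" by (simp add: mult.commute)
      hence "U \<in> E2" unfolding E2_def using lam by simp
      thus ?thesis by simp
    next
      case False
      hence "smax + \<delta> \<le> Y U / (r * N)" using h by simp
      hence "(smax + \<delta>) * (r * N) \<le> Y U / (r * N) * (r * N)" using rN by (intro mult_right_mono) auto
      moreover have "Y U / (r * N) * (r * N) = Y U" using rN Npos r by simp
      ultimately have "r * N * (smax + \<delta>) \<le> Y U" by (simp add: mult.commute)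
      hence "U \<in> E1" unfolding E1_def using lam by (simp add: mult_left_mono)
      thus ?thesis by simp
    qed
  qed
  have b1: "measure ?M E1 \<le> exp (- (r * N * lam * \<delta> / 2))"
  proof -
    have "measure ?M E1 \<le> exp (- (lam * (r * N * (smax + \<delta>))) + (\<Sum>x\<in>Pairs n. q x * (exp (lam * real (c x)) - 1)))"
      unfolding E1_def Y_def by (rule chernoff_Pi[OF finite_Pairs q01])
    also have "\<dots> \<le> exp (- (r * N * lam * \<delta> / 2))"
    proof -
      have "(\<Sum>x\<in>Pairs n. q x * (exp (lam * real (c x)) - 1)) \<le> (lam + 2 * lam\<^sup>2) * mu"
        using tb[of lam] lam by simp
      also have "\<dots> \<le> (lam + 2 * lam\<^sup>2) * (r * smax * N)"
        using mu_up lam by (intro mult_left_mono) auto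
      finally have A: "(\<Sum>x\<in>Pairs n. q x * (exp (lam * real (c x)) - 1)) \<le> (lam + 2 * lam\<^sup>2) * (r * smax * N)" .
      have B: "- (lam * (r * N * (smax + \<delta>))) + (lam + 2 * lam\<^sup>2) * (r * smax * N)
               = r * N * lam * (2 * lam * smax - \<delta>)" by (simp add: algebra_simps power2_eq_square)
      have C: "r * N * lam * (2 * lam * smax - \<delta>) \<le> r * N * lam * (- \<delta> / 2)"
        using rN lam by (intro mult_left_mono) auto
      show ?thesis using A B C by simp
    qed
    finally show ?thesis .
  qed
  have b2: "measure ?M E2 \<le> exp (- (r * N * lam * \<delta> / 2))"
  proof -
    have "measure ?M E2 \<le> exp (- (- lam * (r * N * (smin - \<delta>))) + (\<Sum>x\<in>Pairs n. q x * (exp (- lam * real (c x)) - 1)))"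
      unfolding E2_def Y_def by (rule chernoff_Pi[OF finite_Pairs q01])
    also have "\<dots> \<le> exp (- (r * N * lam * \<delta> / 2))"
    proof -
      have "(\<Sum>x\<in>Pairs n. q x * (exp (- lam * real (c x)) - 1)) \<le> (- lam + 2 * (- lam)\<^sup>2) * mu"
        using tb[of "- lam"] lam by simp
      also have "\<dots> \<le> (- lam + 2 * lam\<^sup>2) * (r * smin * N)"
      proof -
        have "- lam + 2 * lam\<^sup>2 \<le> 0" using lam by (simp add: power2_eq_square)
        thus ?thesis using mu_lo by (simp add: mult_left_mono_neg)
      qed
      finally have A: "(\<Sum>x\<in>Pairs n. q x * (exp (- lam * real (c x)) - 1)) \<le> (- lam + 2 * lam\<^sup>2) * (r * smin * N)" .
      have B: "- (- lam * (r * N * (smin - \<delta>))) + (- lam + 2 * lam\<^sup>2) * (r * smin * N)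
               = r * N * lam * (2 * lam * smin - \<delta>)" by (simp add: algebra_simps power2_eq_square)
      have sm: "2 * lam * smin - \<delta> \<le> - \<delta> / 2"
      proof -
        have "lam * smin \<le> lam * smax" using smm lam by (simp add: mult_left_mono)
        thus ?thesis using lam by linarith
      qed
      have C: "r * N * lam * (2 * lam * smin - \<delta>) \<le> r * N * lam * (- \<delta> / 2)"
        by (intro mult_left_mono sm) (use rN lam in auto)
      show ?thesis using A B C by simp
    qed
    finally show ?thesis .
  qed
  have "measure ?M {U. \<not> (smin - \<delta> < real (o_cnt n (symA U) e a b) / (r * N) \<and>
             real (o_cnt n (symA U) e a b) / (r * N) < smax + \<delta>)} \<le> measure ?M (E1 \<union> E2)"
    by (rule measure_pmf.finite_measure_mono[OF sub]) simp
  also have "\<dots> \<le> measure ?M E1 + measure ?M E2"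
    by (rule measure_Un_le) auto
  finally show ?thesis using b1 b2 unfolding N_def q_def by simp
qed



lemma sbm_eq: "sbm_pmf n p r S = Pi_pmf {..<n} 0 (\<lambda>_. p) \<bind> (\<lambda>z.
   map_pmf (\<lambda>U. (z, symA U)) (Pi_pmf (Pairs n) False (\<lambda>x. bernoulli_pmf (r * S (z (fst x)) (z (snd x))))))"
  unfolding sbm_pmf_def map_pmf_def symA_def Pairs_def by (simp add: split_def)

lemma sbm_bound:
  fixes r smin smax \<delta> lam :: real and e :: "nat \<Rightarrow> nat"
  assumes p: "set_pmf p = {..<k}"
    and r: "r > 0" and rle: "r * smax \<le> 1" and smin: "smin > 0" and smm: "smin \<le> smax"
    and Sb: "\<And>a b. a < k \<Longrightarrow> b < k \<Longrightarrow> smin \<le> S a b \<and> S a b \<le> smax"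
    and N: "n_pair n e a b > 0"
    and lam: "0 < lam" "lam \<le> 1/2" "4 * lam * smax \<le> \<delta>" and d: "\<delta> > 0"
  shows "measure (measure_pmf (sbm_pmf n p r S))
     {x. \<not> (smin - \<delta> < real (o_cnt n (snd x) e a b) / (r * real (n_pair n e a b)) \<and>
             real (o_cnt n (snd x) e a b) / (r * real (n_pair n e a b)) < smax + \<delta>)}
     \<le> 2 * exp (- (r * real (n_pair n e a b) * lam * \<delta> / 2))"
    (is "measure _ ?B \<le> ?c")
proof -
  let ?Z = "Pi_pmf {..<n} (0::nat) (\<lambda>_. p)"
  let ?F = "\<lambda>z. map_pmf (\<lambda>U. (z, symA U)) (Pi_pmf (Pairs n) False (\<lambda>x. bernoulli_pmf (r * S (z (fst x)) (z (snd x)))))"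
  have c0: "?c \<ge> 0" by simp
  have inner: "measure (measure_pmf (?F z)) ?B \<le> ?c" if z: "z \<in> set_pmf ?Z" for z
  proof -
    have zk: "\<And>i. i < n \<Longrightarrow> z i < k" using z p by (auto simp: set_Pi_pmf PiE_dflt_def)
    have "measure (measure_pmf (?F z)) ?B = measure (measure_pmf (Pi_pmf (Pairs n) False (\<lambda>x. bernoulli_pmf (r * S (z (fst x)) (z (snd x))))))
     {U. \<not> (smin - \<delta> < real (o_cnt n (symA U) e a b) / (r * real (n_pair n e a b)) \<and>
             real (o_cnt n (symA U) e a b) / (r * real (n_pair n e a b)) < smax + \<delta>)}"
      by (simp add: vimage_def)
    also have "\<dots> \<le> ?c"
      by (rule cond_bound[OF r rle smin smm _ N lam d]) (use Sb zk in auto)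
    finally show ?thesis .
  qed
  have "emeasure (measure_pmf (sbm_pmf n p r S)) ?B = (\<integral>\<^sup>+z. emeasure (measure_pmf (?F z)) ?B \<partial>?Z)"
    unfolding sbm_eq by simp
  also have "\<dots> \<le> (\<integral>\<^sup>+z. ennreal ?c \<partial>?Z)"
    by (intro nn_integral_mono_AE AE_pmfI)
       (use inner in \<open>auto simp: measure_pmf.emeasure_eq_measure\<close>)
  also have "\<dots> = ennreal ?c" by simp
  finally show ?thesis using c0 by (simp add: measure_pmf.emeasure_eq_measure)
qed



lemma smin_smax:
  assumes "k > 0" "\<forall>a<k. \<forall>b<k. S a b > 0"
  shows "s_min k S > 0" "s_min k S \<le> s_max k S"
    "\<And>a b. a < k \<Longrightarrow> b < k \<Longrightarrow> s_min k S \<le> S a b \<and> S a b \<le> s_max k S"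
proof -
  define T where "T = {S a b | a b. a < k \<and> b < k}"
  have T: "T = (\<lambda>(a, b). S a b) ` ({..<k} \<times> {..<k})" by (auto simp: T_def)
  have fT: "finite T" unfolding T by simp
  have neT: "T \<noteq> {}" using assms(1) by (auto simp: T_def)
  have mem: "S a b \<in> T" if "a < k" "b < k" for a b using that by (auto simp: T_def)
  show ab: "s_min k S \<le> S a b \<and> S a b \<le> s_max k S" if "a < k" "b < k" for a b
    using mem[OF that] fT by (simp add: s_min_def s_max_def T_def[symmetric])
  have "s_min k S \<in> T" using fT neT Min_in by (simp add: s_min_def T_def[symmetric])
  thus "s_min k S > 0" using assms(2) by (auto simp: T_def)
  show "s_min k S \<le> s_max k S" using ab[of 0 0] assms(1) by simp
qed

lemma npair_lb:
  fixes \<alpha> :: real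
  assumes "\<forall>a<k. \<alpha> * real n \<le> real (n_cnt n e a)" "\<alpha> * real n \<ge> 2" "a < k" "b < k" "\<alpha> > 0"
  shows "real (n_pair n e a b) \<ge> \<alpha>\<^sup>2 * (real n)\<^sup>2 / 2"
proof -
  let ?m = "\<lambda>a. real (n_cnt n e a)"
  have ma: "?m a \<ge> \<alpha> * n" and mb: "?m b \<ge> \<alpha> * n" using assms by auto
  have sq: "\<alpha>\<^sup>2 * (real n)\<^sup>2 = (\<alpha> * n) * (\<alpha> * n)" by (simp add: power2_eq_square)
  show ?thesis
  proof (cases "a = b")
    case False
    have "(\<alpha> * n) * (\<alpha> * n) \<le> ?m a * ?m b" using ma mb assms(2) by (intro mult_mono) auto
    moreover have "0 \<le> ?m a * ?m b" by simp
    moreover have "real (n_pair n e a b) = ?m a * ?m b" using False by (simp add: n_pair_def)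
    ultimately show ?thesis using sq by linarith
  next
    case True
    have m2: "n_cnt n e a \<ge> 2" using ma assms(2) by linarith
    have eq: "real (n_pair n e a b) = ?m a * (?m a - 1)" using True m2 by (simp add: n_pair_def of_nat_diff)
    have "(\<alpha> * n) * (\<alpha> * n) \<le> ?m a * ?m a" using ma assms(2) by (intro mult_mono) auto
    moreover have "?m a * ?m a / 2 \<le> ?m a * (?m a - 1)"
    proof -
      have "?m a / 2 \<le> ?m a - 1" using m2 by simp
      hence "?m a * (?m a / 2) \<le> ?m a * (?m a - 1)" by (intro mult_left_mono) auto
      thus ?thesis by simp
    qed
    ultimately show ?thesis using eq sq by simp
  qed
qed



lemma cnt_cong:
  assumes "\<forall>i<n. e i = e' i"
  shows "n_cnt n e a = n_cnt n e' a" "o_cnt n A e a b = o_cnt n A e' a b" "n_pair n e a b = n_pair n e' a b"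
proof -
  show 1: "n_cnt n e a = n_cnt n e' a" for a unfolding n_cnt_def using assms
    by (metis (no_types, lifting) Collect_cong)
  show "o_cnt n A e a b = o_cnt n A e' a b" unfolding o_cnt_def using assms
    by (intro arg_cong[where f=card]) auto
  show "n_pair n e a b = n_pair n e' a b" unfolding n_pair_def using 1 by simp
qed

lemma B_bound:
  fixes r smin smax \<delta> lam \<alpha> :: real
  assumes p: "set_pmf p = {..<k}" and k: "k \<ge> 2"
    and r: "r > 0" and rle: "r * smax \<le> 1" and smin: "smin > 0" and smm: "smin \<le> smax"
    and Sb: "\<And>a b. a < k \<Longrightarrow> b < k \<Longrightarrow> smin \<le> S a b \<and> S a b \<le> smax"
    and lam: "0 < lam" "lam \<le> 1/2" "4 * lam * smax \<le> \<delta>" and d: "\<delta> > 0"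
    and al: "\<alpha> > 0" "\<alpha> * real n \<ge> 2"
    and nr: "real n * r \<ge> 4 * (ln (real k) + 1) / (\<alpha>\<^sup>2 * lam * \<delta>)"
  shows "measure (measure_pmf (sbm_pmf n p r S)) {x. \<not> (\<forall>e. (\<forall>i<n. e i < k) \<longrightarrow> (\<forall>a<k. real (n_cnt n e a) \<ge> \<alpha> * real n) \<longrightarrow>
             (\<forall>a<k. \<forall>b<k.
               smin - \<delta> < real (o_cnt n (snd x) e a b) / (r * real (n_pair n e a b)) \<and>
               real (o_cnt n (snd x) e a b) / (r * real (n_pair n e a b)) < smax + \<delta>))}
    \<le> 2 * (real k)\<^sup>2 * exp (-1) ^ n"
    (is "measure ?M ?B \<le> _")
proof -
  define E' where "E' = {e \<in> PiE {..<n} (\<lambda>_. {..<k}). \<forall>a<k. real (n_cnt n e a) \<ge> \<alpha> * real n}"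
  define I where "I = E' \<times> {..<k} \<times> {..<k}"
  define Bad where "Bad = (\<lambda>(e, a, b). {x :: (nat \<Rightarrow> nat) \<times> (nat \<Rightarrow> nat \<Rightarrow> bool). \<not> (smin - \<delta> < real (o_cnt n (snd x) e a b) / (r * real (n_pair n e a b)) \<and>
               real (o_cnt n (snd x) e a b) / (r * real (n_pair n e a b)) < smax + \<delta>)})"
  have finE: "finite (PiE {..<n} (\<lambda>_. {..<k::nat}))" by (intro finite_PiE) auto
  have cardE: "card E' \<le> k ^ n"
  proof -
    have "card E' \<le> card (PiE {..<n} (\<lambda>_. {..<k::nat}))" unfolding E'_def by (intro card_mono finE) auto
    also have "\<dots> = k ^ n" by (simp add: card_PiE)
    finally show ?thesis .
  qed
  have finI: "finite I" unfolding I_def E'_def using finE by auto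
  have cardI: "real (card I) \<le> real k ^ n * (real k)\<^sup>2"
  proof -
    have "card I = card E' * (k * k)" unfolding I_def by (simp add: card_cartesian_product)
    also have "\<dots> \<le> k ^ n * (k * k)" using cardE by simp
    finally have "card I \<le> k ^ n * (k * k)" .
    hence "real (card I) \<le> real (k ^ n * (k * k))" by linarith
    thus ?thesis by (simp add: power2_eq_square)
  qed
  have sub: "?B \<subseteq> (\<Union>i\<in>I. Bad i)"
  proof
    fix x assume "x \<in> ?B"
    then obtain e a b where e: "\<forall>i<n. e i < k" "\<forall>a<k. real (n_cnt n e a) \<ge> \<alpha> * real n" and ab: "a < k" "b < k"
      and bad: "\<not> (smin - \<delta> < real (o_cnt n (snd x) e a b) / (r * real (n_pair n e a b)) \<and>
               real (o_cnt n (snd x) e a b) / (r * real (n_pair n e a b)) < smax + \<delta>)" by blast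
    define e' where "e' = restrict e {..<n}"
    have ee: "\<forall>i<n. e i = e' i" by (simp add: e'_def)
    have pie: "e' \<in> PiE {..<n} (\<lambda>_. {..<k})" using e(1) by (auto simp: e'_def)
    have "\<forall>a<k. real (n_cnt n e' a) \<ge> \<alpha> * real n" using e(2) cnt_cong(1)[OF ee] by metis
    hence "e' \<in> E'" unfolding E'_def using pie by blast
    hence "(e', a, b) \<in> I" using ab by (simp add: I_def)
    moreover have "x \<in> Bad (e', a, b)" using bad cnt_cong(2,3)[OF ee] by (simp add: Bad_def)
    ultimately show "x \<in> (\<Union>i\<in>I. Bad i)" by blast
  qed
  define K where "K = ln (real k) + 1"
  have kpos: "real k > 0" using k by simp
  have each: "measure ?M (Bad i) \<le> 2 * exp (- (real n * K))" if i: "i \<in> I" for i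
  proof -
    obtain e a b where iv: "i = (e, a, b)" by (metis prod_cases3)
    have eE: "e \<in> E'" and ab: "a < k" "b < k" using i iv by (auto simp: I_def)
    have Nlb: "real (n_pair n e a b) \<ge> \<alpha>\<^sup>2 * (real n)\<^sup>2 / 2"
      by (rule npair_lb) (use eE ab al in \<open>auto simp: E'_def\<close>)
    have npos: "real n > 0"
    proof (rule ccontr)
      assume "\<not> real n > 0" hence "n = 0" by simp
      thus False using al by simp
    qed
    have Npos: "n_pair n e a b > 0"
    proof -
      have "\<alpha>\<^sup>2 * (real n)\<^sup>2 / 2 > 0" using al npos by simp
      thus ?thesis using Nlb by linarith
    qed
    have "measure ?M (Bad i) \<le> 2 * exp (- (r * real (n_pair n e a b) * lam * \<delta> / 2))"
      unfolding iv Bad_def prod.case by (rule sbm_bound[OF p r rle smin smm Sb Npos lam d])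
    also have "\<dots> \<le> 2 * exp (- (real n * K))"
    proof -
      have c0: "\<alpha>\<^sup>2 * lam * \<delta> > 0" using al lam d by simp
      have "real n * r * (\<alpha>\<^sup>2 * lam * \<delta>) \<ge> 4 * K"
        using nr c0 by (simp add: K_def field_simps)
      hence "real n * (real n * r * (\<alpha>\<^sup>2 * lam * \<delta>)) \<ge> real n * (4 * K)"
        using npos by (intro mult_left_mono) auto
      moreover have "r * real (n_pair n e a b) * lam * \<delta> / 2 \<ge> r * (\<alpha>\<^sup>2 * (real n)\<^sup>2 / 2) * lam * \<delta> / 2"
        using Nlb r lam d by (intro divide_right_mono mult_right_mono mult_left_mono) auto
      ultimately have "r * real (n_pair n e a b) * lam * \<delta> / 2 \<ge> real n * K"
        by (simp add: power2_eq_square algebra_simps)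
      thus ?thesis by simp
    qed
    finally show ?thesis .
  qed
  have "measure ?M ?B \<le> measure ?M (\<Union>i\<in>I. Bad i)"
    by (rule measure_pmf.finite_measure_mono[OF sub]) simp
  also have "\<dots> \<le> (\<Sum>i\<in>I. measure ?M (Bad i))"
    by (rule measure_pmf.finite_measure_subadditive_finite[OF finI]) simp
  also have "\<dots> \<le> real (card I) * (2 * exp (- (real n * K)))"
    by (rule sum_bounded_above) (use each in auto)
  also have "\<dots> \<le> real k ^ n * (real k)\<^sup>2 * (2 * exp (- (real n * K)))"
    by (intro mult_right_mono cardI) simp
  also have "\<dots> = 2 * (real k)\<^sup>2 * exp (-1) ^ n"
  proof -
    have "exp (- (real n * K)) = exp (- (real n * ln (real k))) * exp (real n * (-1))"
      by (simp add: K_def algebra_simps exp_add[symmetric])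
    also have "\<dots> = inverse (real k ^ n) * exp (-1) ^ n"
    proof -
      have "exp (real n) = exp 1 ^ n" using exp_of_nat_mult[of n 1] by simp
      moreover have "exp (ln (real k)) = real k" using kpos by (rule exp_ln)
      ultimately show ?thesis by (simp add: exp_minus exp_of_nat_mult power_inverse)
    qed
    finally show ?thesis using kpos by (simp add: field_simps)
  qed
  finally show ?thesis .
qed



theorem corollary1:
  fixes M :: "'w measure"
    and k :: nat and p :: "nat pmf" and S :: "nat \<Rightarrow> nat \<Rightarrow> real" and \<rho> :: "nat \<Rightarrow> real"
    and X :: "nat \<Rightarrow> 'w \<Rightarrow> (nat \<Rightarrow> nat) \<times> (nat \<Rightarrow> nat \<Rightarrow> bool)"
    and \<alpha> \<delta> :: real
  assumes "prob_space M"
    and "k \<ge> 2"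
    and "set_pmf p = {..<k}"
    and "\<forall>a<k. \<forall>b<k. S a b = S b a"
    and "\<forall>a<k. \<forall>b<k. S a b > 0"
    and "\<forall>a<k. \<forall>b<k. a \<noteq> b \<longrightarrow> (\<exists>c<k. S c a \<noteq> S c b)"
    and "\<forall>n. \<rho> n > 0"
    and "\<rho> \<longlonglongrightarrow> 0"
    and "filterlim (\<lambda>n. real n * \<rho> n) at_top sequentially"
    and "\<And>n. X n \<in> M \<rightarrow>\<^sub>M measure_pmf (sbm_pmf n p (\<rho> n) S)"
    and "\<And>n. distr M (measure_pmf (sbm_pmf n p (\<rho> n) S)) (X n) = measure_pmf (sbm_pmf n p (\<rho> n) S)"
    and "\<alpha> > 0"
    and "0 < \<delta>" and "\<delta> < s_min k S / 2"
    and "eventually (\<lambda>n. real n * \<rho> n > 4 * s_max k S / (\<alpha>\<^sup>2 * \<delta>\<^sup>2)) sequentially"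
  shows "AE \<omega> in M. eventually (\<lambda>n.
           \<forall>e. (\<forall>i<n. e i < k) \<longrightarrow> (\<forall>a<k. real (n_cnt n e a) \<ge> \<alpha> * real n) \<longrightarrow>
             (\<forall>a<k. \<forall>b<k.
               s_min k S - \<delta> < real (o_cnt n (snd (X n \<omega>)) e a b) / (\<rho> n * real (n_pair n e a b)) \<and>
               real (o_cnt n (snd (X n \<omega>)) e a b) / (\<rho> n * real (n_pair n e a b)) < s_max k S + \<delta>))
         sequentially"
proof -
  interpret P: prob_space M by fact
  note k = assms(2) and p = assms(3) and rpos = assms(7) and r0 = assms(8) and nr = assms(9)
    and meas = assms(10) and dist = assms(11) and al = assms(12) and d = assms(13)
  define smin where "smin = s_min k S"
  define smax where "smax = s_max k S"
  have k0: "k > 0" using k by simp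
  have smin: "smin > 0" and smm: "smin \<le> smax"
    and Sb: "\<And>a b. a < k \<Longrightarrow> b < k \<Longrightarrow> smin \<le> S a b \<and> S a b \<le> smax"
    using smin_smax[OF k0 assms(5)] unfolding smin_def smax_def by auto
  have smax: "smax > 0" using smin smm by simp
  define lam where "lam = min (1/2) (\<delta> / (4 * smax))"
  have lam: "0 < lam" "lam \<le> 1/2" "4 * lam * smax \<le> \<delta>"
  proof -
    show "0 < lam" using d smax by (simp add: lam_def)
    show "lam \<le> 1/2" by (simp add: lam_def)
    have "lam \<le> \<delta> / (4 * smax)" by (simp add: lam_def)
    hence "lam * (4 * smax) \<le> \<delta> / (4 * smax) * (4 * smax)" using smax by (intro mult_right_mono) auto
    thus "4 * lam * smax \<le> \<delta>" using smax by (simp add: mult_ac)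
  qed
  define Cst where "Cst = 4 * (ln (real k) + 1) / (\<alpha>\<^sup>2 * lam * \<delta>)"
  have ev1: "eventually (\<lambda>n. \<rho> n * smax \<le> 1) sequentially"
  proof -
    have "eventually (\<lambda>n. \<rho> n < 1 / smax) sequentially"
      using order_tendstoD(2)[OF r0, of "1/smax"] smax by simp
    thus ?thesis
    proof (rule eventually_mono)
      fix n assume "\<rho> n < 1 / smax"
      hence "\<rho> n * smax < 1 / smax * smax" using smax by (intro mult_strict_right_mono) auto
      thus "\<rho> n * smax \<le> 1" using smax by simp
    qed
  qed
  have ev2: "eventually (\<lambda>n. \<alpha> * real n \<ge> 2) sequentially"
  proof -
    have "eventually (\<lambda>n. 2 / \<alpha> \<le> real n) sequentially"
      using filterlim_real_sequentially unfolding filterlim_at_top by blast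
    thus ?thesis
    proof (rule eventually_mono)
      fix n assume "2 / \<alpha> \<le> real n"
      hence "2 / \<alpha> * \<alpha> \<le> real n * \<alpha>" using al by (intro mult_right_mono) auto
      thus "\<alpha> * real n \<ge> 2" using al by (simp add: mult.commute)
    qed
  qed
  have ev3: "eventually (\<lambda>n. real n * \<rho> n \<ge> Cst) sequentially"
    using nr unfolding filterlim_at_top by blast
  define Bn where "Bn = (\<lambda>n. {x :: (nat \<Rightarrow> nat) \<times> (nat \<Rightarrow> nat \<Rightarrow> bool). \<not> (\<forall>e. (\<forall>i<n. e i < k) \<longrightarrow> (\<forall>a<k. real (n_cnt n e a) \<ge> \<alpha> * real n) \<longrightarrow>
             (\<forall>a<k. \<forall>b<k.
               smin - \<delta> < real (o_cnt n (snd x) e a b) / (\<rho> n * real (n_pair n e a b)) \<and>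
               real (o_cnt n (snd x) e a b) / (\<rho> n * real (n_pair n e a b)) < smax + \<delta>))})"
  define A where "A = (\<lambda>n. X n -` Bn n \<inter> space M)"
  have Asets: "A n \<in> sets M" for n unfolding A_def by (rule measurable_sets[OF meas]) simp
  have Ameas: "measure M (A n) = measure (measure_pmf (sbm_pmf n p (\<rho> n) S)) (Bn n)" for n
  proof -
    have "measure (distr M (measure_pmf (sbm_pmf n p (\<rho> n) S)) (X n)) (Bn n) = measure M (X n -` Bn n \<inter> space M)"
      by (rule measure_distr[OF meas[of n]]) simp
    thus ?thesis by (simp add: A_def dist)
  qed
  have evB: "eventually (\<lambda>n. norm (measure M (A n)) \<le> 2 * (real k)\<^sup>2 * exp (-1) ^ n) sequentially"
    using ev1 ev2 ev3
  proof eventually_elim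
    case (elim n)
    have c: "4 * (ln (real k) + 1) / (\<alpha>\<^sup>2 * lam * \<delta>) \<le> real n * \<rho> n" using elim Cst_def by simp
    have "measure (measure_pmf (sbm_pmf n p (\<rho> n) S)) (Bn n) \<le> 2 * (real k)\<^sup>2 * exp (-1) ^ n"
      unfolding Bn_def
      by (rule B_bound[OF p k rpos[rule_format] elim(1) smin smm Sb lam d al elim(2)])
         (use c in auto)
    thus ?case by (simp add: Ameas)
  qed
  have sg: "summable (\<lambda>n. 2 * (real k)\<^sup>2 * exp (-1::real) ^ n)"
    by (intro summable_mult summable_geometric) simp
  have sum: "summable (\<lambda>n. measure M (A n))"
    by (rule summable_comparison_test_ev[OF evB sg])
  have bc: "AE x in M. eventually (\<lambda>n. x \<in> space M - A n) sequentially"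
    by (rule borel_cantelli_AE1[OF Asets _ sum]) (simp add: less_top[symmetric])
  show ?thesis
  proof (rule AE_mp[OF bc], rule AE_I2, rule impI)
    fix \<omega> assume "eventually (\<lambda>n. \<omega> \<in> space M - A n) sequentially"
    thus "eventually (\<lambda>n.
           \<forall>e. (\<forall>i<n. e i < k) \<longrightarrow> (\<forall>a<k. real (n_cnt n e a) \<ge> \<alpha> * real n) \<longrightarrow>
             (\<forall>a<k. \<forall>b<k.
               s_min k S - \<delta> < real (o_cnt n (snd (X n \<omega>)) e a b) / (\<rho> n * real (n_pair n e a b)) \<and>
               real (o_cnt n (snd (X n \<omega>)) e a b) / (\<rho> n * real (n_pair n e a b)) < s_max k S + \<delta>))
         sequentially"
      by (rule eventually_mono) (auto simp: A_def Bn_def smin_def smax_def)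
  qed
qed


end
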